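(* Let $G=\Box_{i=1}^{l}G_i$ be a Cartesian product of stars $G_1,\dots,G_l$, where the vertices of each $G_i$ are labelled $0,1,\dots,|V(G_i)|-1$ with $0$ the star-center of $G_i$, and let $v_G$ be the vertex with coordinates $(0,\dots,0)$. Then for every integer $k\geq 0$, the induced subgraph $\langle N_k^G[v_G]\rangle$ is an isometric subgraph of $G$.
   Context: A star is a connected acyclic graph on vertex set $V$ having a vertex (its star-center) of degree $|V|-1$, all other vertices having degree $1$. The Cartesian product $G\Box H$ has vertex set $V(G)\times V(H)$, with $(g_1,h_1)$ adjacent to $(g_2,h_2)$ iff either $(g_1,g_2)\in E(G)$ and $h_1=h_2$, or $(h_1,h_2)\in E(H)$ and $g_1=g_2$; vertices of $\Box_{i}G_i$ are written as coordinate vectors. $N_k^G[v]=\{x\in V(G): d_G(v,x)\le k\}$ and $\langle N_k^G[v]\rangle$ is the subgraph it induces. A subgraph $H\subseteq G$ is isometric if $d_H(x,y)=d_G(x,y)$ for all $x,y\in V(H)$. *)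

theory Defs
  imports Main "HOL-Library.Extended_Nat"
begin

type_synonym 'a graph = "'a set \<times> ('a \<Rightarrow> 'a \<Rightarrow> bool)"

definition verts :: "'a graph \<Rightarrow> 'a set" where "verts G = fst G"
definition adj :: "'a graph \<Rightarrow> 'a \<Rightarrow> 'a \<Rightarrow> bool" where "adj G = snd G"

definition walk :: "'a graph \<Rightarrow> 'a list \<Rightarrow> bool" where
  "walk G p \<longleftrightarrow> p \<noteq> [] \<and> set p \<subseteq> verts G \<and>
     (\<forall>i. Suc i < length p \<longrightarrow> adj G (p ! i) (p ! Suc i))"

text \<open>Graph distance (infinite if no walk exists).\<close>
definition gdist :: "'a graph \<Rightarrow> 'a \<Rightarrow> 'a \<Rightarrow> enat" where
  "gdist G x y = (INF p \<in> {p. walk G p \<and> hd p = x \<and> last p = y}. enat (length p - 1))"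

definition closed_nbhd :: "'a graph \<Rightarrow> 'a \<Rightarrow> nat \<Rightarrow> 'a set" where
  "closed_nbhd G v k = {x \<in> verts G. gdist G v x \<le> enat k}"

definition induced :: "'a graph \<Rightarrow> 'a set \<Rightarrow> 'a graph" where
  "induced G S = (S \<inter> verts G, \<lambda>a b. a \<in> S \<and> b \<in> S \<and> adj G a b)"

definition isometric_subgraph :: "'a graph \<Rightarrow> 'a graph \<Rightarrow> bool" where
  "isometric_subgraph H G \<longleftrightarrow> verts H \<subseteq> verts G \<and>
     (\<forall>a b. adj H a b \<longrightarrow> adj G a b) \<and>
     (\<forall>x \<in> verts H. \<forall>y \<in> verts H. gdist H x y = gdist G x y)"

definition star :: "nat \<Rightarrow> nat graph" where
  "star n = ({..<n}, \<lambda>a b. a < n \<and> b < n \<and> a \<noteq> b \<and> (a = 0 \<or> b = 0))"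

definition cart_prod :: "'a graph list \<Rightarrow> 'a list graph" where
  "cart_prod Gs = ({xs. length xs = length Gs \<and> (\<forall>i < length Gs. xs ! i \<in> verts (Gs ! i))},
     \<lambda>xs ys. length xs = length Gs \<and> length ys = length Gs \<and>
       (\<exists>i < length Gs. adj (Gs ! i) (xs ! i) (ys ! i) \<and>
          (\<forall>j < length Gs. j \<noteq> i \<longrightarrow> xs ! j = ys ! j)))"

end

theory Submission
  imports Defs
begin

definition ds :: "nat \<Rightarrow> nat \<Rightarrow> nat" where
  "ds a b = (if a \<noteq> 0 \<and> a \<noteq> b then 1 else 0) + (if b \<noteq> 0 \<and> b \<noteq> a then 1 else 0)"

definition DD :: "nat list \<Rightarrow> nat list \<Rightarrow> nat list \<Rightarrow> nat" where
  "DD ns x y = (\<Sum>i<length ns. ds (x!i) (y!i))"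

definition ww :: "nat list \<Rightarrow> nat list \<Rightarrow> nat" where
  "ww ns x = (\<Sum>i<length ns. if x!i \<noteq> 0 then 1 else 0)"

lemma ds_tri: "ds a c \<le> ds a b + ds b c"
  unfolding ds_def by auto

lemma ds_self[simp]: "ds a a = 0" unfolding ds_def by auto

lemma DD_tri: "DD ns x z \<le> DD ns x y + DD ns y z"
  unfolding DD_def sum.distrib[symmetric] by (rule sum_mono) (rule ds_tri)

lemma walk_Cons: "p \<noteq> [] \<Longrightarrow> walk G (a # p) \<longleftrightarrow> a \<in> verts G \<and> walk G p \<and> adj G a (hd p)"
  unfolding walk_def
proof (intro iffI; elim conjE; intro conjI)
  assume p: "p \<noteq> []" and h: "\<forall>i. Suc i < length (a # p) \<longrightarrow> adj G ((a # p) ! i) ((a # p) ! Suc i)"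
  show "\<forall>i. Suc i < length p \<longrightarrow> adj G (p ! i) (p ! Suc i)"
  proof (intro allI impI)
    fix i assume "Suc i < length p"
    then show "adj G (p ! i) (p ! Suc i)" using h[rule_format, of "Suc i"] by simp
  qed
  show "adj G a (hd p)" using h[rule_format, of 0] p by (simp add: hd_conv_nth)
next
  assume p: "p \<noteq> []" and h: "\<forall>i. Suc i < length p \<longrightarrow> adj G (p ! i) (p ! Suc i)"
    and h2: "adj G a (hd p)"
  show "\<forall>i. Suc i < length (a # p) \<longrightarrow> adj G ((a # p) ! i) ((a # p) ! Suc i)"
  proof (intro allI impI)
    fix i assume i: "Suc i < length (a # p)"
    show "adj G ((a # p) ! i) ((a # p) ! Suc i)"
    proof (cases i)
      case 0 then show ?thesis using h2 p by (simp add: hd_conv_nth)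
    next
      case (Suc j) then show ?thesis using h[rule_format, of j] i by simp
    qed
  qed
qed auto

lemma walk_induced: "walk (induced G S) p \<longleftrightarrow> walk G p \<and> set p \<subseteq> S"
  unfolding walk_def induced_def verts_def adj_def
  by (auto simp: nth_mem)

lemma verts_cp: "verts (cart_prod (map star ns)) = {xs. length xs = length ns \<and> (\<forall>i<length ns. xs!i < ns!i)}"
  unfolding cart_prod_def verts_def star_def by auto

lemma adj_cp: "adj (cart_prod (map star ns)) x y \<longleftrightarrow> length x = length ns \<and> length y = length ns \<and>
   (\<exists>i<length ns. (x!i < ns!i \<and> y!i < ns!i \<and> x!i \<noteq> y!i \<and> (x!i = 0 \<or> y!i = 0)) \<and>
      (\<forall>j<length ns. j \<noteq> i \<longrightarrow> x!j = y!j))"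
  unfolding cart_prod_def adj_def star_def by auto

lemma DD_adj: assumes "adj (cart_prod (map star ns)) x y" shows "DD ns x y = 1"
proof -
  from assms obtain i where i: "i < length ns" "x!i \<noteq> y!i" "x!i = 0 \<or> y!i = 0"
    and o: "\<forall>j<length ns. j \<noteq> i \<longrightarrow> x!j = y!j" unfolding adj_cp by blast
  have "DD ns x y = ds (x!i) (y!i) + (\<Sum>j\<in>{..<length ns} - {i}. ds (x!j) (y!j))"
    unfolding DD_def using i by (simp add: sum.remove)
  also have "(\<Sum>j\<in>{..<length ns} - {i}. ds (x!j) (y!j)) = 0"
    using o by (intro sum.neutral) auto
  finally show ?thesis using i unfolding ds_def by auto
qed

lemma walk_lower: "walk (cart_prod (map star ns)) p \<Longrightarrow> DD ns (hd p) (last p) \<le> length p - 1"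
proof (induction p)
  case Nil then show ?case by (simp add: walk_def)
next
  case (Cons a q)
  show ?case
  proof (cases "q = []")
    case True then show ?thesis by (simp add: DD_def)
  next
    case False
    have ww: "a \<in> verts (cart_prod (map star ns)) \<and> walk (cart_prod (map star ns)) q \<and> adj (cart_prod (map star ns)) a (hd q)"
      using Cons.prems unfolding walk_Cons[OF False] .
    then have w: "walk (cart_prod (map star ns)) q" "adj (cart_prod (map star ns)) a (hd q)" by auto
    have "DD ns a (last q) \<le> DD ns a (hd q) + DD ns (hd q) (last q)" by (rule DD_tri)
    also have "\<dots> \<le> 1 + (length q - 1)" using DD_adj[OF w(2)] Cons.IH[OF w(1)] by simp
    also have "\<dots> = length (a # q) - 1" using False by (cases q) auto
    finally show ?thesis using False by simp
  qed
qed

lemma DD_update: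
  assumes "i < length ns" "i < length x"
  shows "DD ns (x[i:=v]) y + ds (x!i) (y!i) = DD ns x y + ds v (y!i)"
proof -
  have e: "(\<Sum>j\<in>{..<length ns} - {i}. ds (x[i:=v]!j) (y!j)) = (\<Sum>j\<in>{..<length ns} - {i}. ds (x!j) (y!j))"
    by (intro sum.cong) auto
  have a: "DD ns (x[i:=v]) y = ds (x[i:=v]!i) (y!i) + (\<Sum>j\<in>{..<length ns} - {i}. ds (x[i:=v]!j) (y!j))"
    unfolding DD_def using assms by (simp add: sum.remove)
  have b: "DD ns x y = ds (x!i) (y!i) + (\<Sum>j\<in>{..<length ns} - {i}. ds (x!j) (y!j))"
    unfolding DD_def using assms by (simp add: sum.remove)
  show ?thesis using a b e assms by simp
qed

lemma ww_update:
  assumes "i < length ns" "i < length x"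
  shows "ww ns (x[i:=v]) + (if x!i \<noteq> 0 then 1 else 0) = ww ns x + (if v \<noteq> 0 then 1 else 0)"
proof -
  have e: "(\<Sum>j\<in>{..<length ns} - {i}. if x[i:=v]!j \<noteq> 0 then 1 else 0) = (\<Sum>j\<in>{..<length ns} - {i}. if x!j \<noteq> 0 then 1 else (0::nat))"
    by (intro sum.cong) auto
  have a: "ww ns (x[i:=v]) = (if x[i:=v]!i \<noteq> 0 then 1 else 0) + (\<Sum>j\<in>{..<length ns} - {i}. if x[i:=v]!j \<noteq> 0 then 1 else 0)"
    unfolding ww_def using assms by (simp add: sum.remove)
  have b: "ww ns x = (if x!i \<noteq> 0 then 1 else 0) + (\<Sum>j\<in>{..<length ns} - {i}. if x!j \<noteq> 0 then 1 else 0)"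
    unfolding ww_def using assms by (simp add: sum.remove)
  show ?thesis using a b e assms by simp
qed

lemma ww_mono: "(\<forall>j<length ns. x!j \<noteq> 0 \<longrightarrow> y!j \<noteq> 0) \<Longrightarrow> ww ns x \<le> ww ns y"
  unfolding ww_def by (intro sum_mono) auto

lemma ds_zero: "ds a b = 0 \<Longrightarrow> a = b" unfolding ds_def by (auto split: if_splits)

lemma DD_zero: "DD ns x y = 0 \<Longrightarrow> length x = length ns \<Longrightarrow> length y = length ns \<Longrightarrow> x = y"
proof -
  assume "DD ns x y = 0" "length x = length ns" "length y = length ns"
  moreover then have "\<forall>i<length ns. ds (x!i) (y!i) = 0" by (simp add: DD_def)
  ultimately show "x = y" by (intro nth_equalityI) (auto intro: ds_zero)
qed

lemma ww_DD: "ww ns x = DD ns (replicate (length ns) 0) x"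
  unfolding ww_def DD_def by (intro sum.cong) (auto simp: ds_def)

lemma construct:
  "\<forall>x. x \<in> verts (cart_prod (map star ns)) \<longrightarrow> y \<in> verts (cart_prod (map star ns)) \<longrightarrow> DD ns x y = n \<longrightarrow>
    (\<exists>p. walk (cart_prod (map star ns)) p \<and> hd p = x \<and> last p = y \<and> length p = Suc n \<and>
       (\<forall>z\<in>set p. ww ns z \<le> max (ww ns x) (ww ns y)))"
proof (induction n)
  case 0
  show ?case
  proof (intro allI impI)
    fix x assume x: "x \<in> verts (cart_prod (map star ns))" and y: "y \<in> verts (cart_prod (map star ns))"
      and d: "DD ns x y = 0"
    have "x = y" using DD_zero[OF d] x y by (simp add: verts_cp)
    then show "\<exists>p. walk (cart_prod (map star ns)) p \<and> hd p = x \<and> last p = y \<and> length p = Suc 0 \<and>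
       (\<forall>z\<in>set p. ww ns z \<le> max (ww ns x) (ww ns y))"
      using x by (intro exI[of _ "[x]"]) (auto simp: walk_def)
  qed
next
  case (Suc n)
  let ?G = "cart_prod (map star ns)"
  show ?case
  proof (intro allI impI)
    fix x assume x: "x \<in> verts ?G" and y: "y \<in> verts ?G" and d: "DD ns x y = Suc n"
    have lx: "length x = length ns" and lbx: "\<forall>i<length ns. x!i < ns!i" using x by (auto simp: verts_cp)
    have ly: "length y = length ns" and lby: "\<forall>i<length ns. y!i < ns!i" using y by (auto simp: verts_cp)
    show "\<exists>p. walk ?G p \<and> hd p = x \<and> last p = y \<and> length p = Suc (Suc n) \<and>
       (\<forall>z\<in>set p. ww ns z \<le> max (ww ns x) (ww ns y))"
    proof (cases "\<exists>i<length ns. x!i \<noteq> 0 \<and> x!i \<noteq> y!i")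
      case True
      then obtain i where i: "i < length ns" "x!i \<noteq> 0" "x!i \<noteq> y!i" by blast
      define x' where "x' = x[i:=0]"
      have x'v: "x' \<in> verts ?G" using x i lx lbx by (auto simp: verts_cp x'_def nth_list_update)
      have "DD ns x' y + ds (x!i) (y!i) = DD ns x y + ds 0 (y!i)" unfolding x'_def by (rule DD_update[OF i(1)]) (simp add: lx i(1))
      then have dx': "DD ns x' y = n" using d i by (auto simp: ds_def split: if_splits)
      have "ww ns x' + 1 = ww ns x" using ww_update[OF i(1), of x 0] i lx by (simp add: x'_def)
      then have wx': "ww ns x' \<le> ww ns x" by simp
      obtain p where p: "walk ?G p" "hd p = x'" "last p = y" "length p = Suc n"
        "\<forall>z\<in>set p. ww ns z \<le> max (ww ns x') (ww ns y)"
        using Suc.IH[rule_format, OF x'v y dx'] by blast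
      have pne: "p \<noteq> []" using p(4) by auto
      have lx': "length x' = length ns" using lx by (simp add: x'_def)
      have e2: "\<forall>j<length ns. j \<noteq> i \<longrightarrow> x!j = x'!j" by (simp add: x'_def)
      have c: "x!i < ns!i" "x'!i < ns!i" "x!i \<noteq> x'!i" "x!i = 0 \<or> x'!i = 0"
      proof -
        have e: "x'!i = 0" using lx i(1) by (simp add: x'_def)
        show "x!i < ns!i" by (rule lbx[rule_format, OF i(1)])
        show "x'!i < ns!i" unfolding e using lbx[rule_format, OF i(1)] by simp
        show "x!i \<noteq> x'!i" unfolding e using i(2) by simp
        show "x!i = 0 \<or> x'!i = 0" using e by simp
      qed
      have adj: "adj ?G x x'" unfolding adj_cp using i(1) lx lx' e2 c by blast
      have wk: "walk ?G (x # p)" using walk_Cons[OF pne, of ?G x] p(1,2) adj x by simp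
      have "max (ww ns x') (ww ns y) \<le> max (ww ns x) (ww ns y)" using wx' by (rule max.mono) simp
      then have "\<forall>z\<in>set (x # p). ww ns z \<le> max (ww ns x) (ww ns y)" using p(5) by fastforce
      then show ?thesis using wk p(3,4) pne by (intro exI[of _ "x # p"]) simp
    next
      case False
      have "\<exists>i<length ns. ds (x!i) (y!i) \<noteq> 0"
      proof (rule ccontr)
        assume "\<not> ?thesis"
        then have "DD ns x y = 0" unfolding DD_def by (intro sum.neutral) auto
        then show False using d by simp
      qed
      then obtain i where i: "i < length ns" "ds (x!i) (y!i) \<noteq> 0" by blast
      have xi: "x!i = 0" "y!i \<noteq> 0" using False i by (auto simp: ds_def split: if_splits)
      define x' where "x' = x[i:=y!i]"
      have x'v: "x' \<in> verts ?G" using x i lx lbx lby by (auto simp: verts_cp x'_def nth_list_update)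
      have "DD ns x' y + ds (x!i) (y!i) = DD ns x y + ds (y!i) (y!i)" unfolding x'_def by (rule DD_update[OF i(1)]) (simp add: lx i(1))
      then have dx': "DD ns x' y = n" using d xi by (auto simp: ds_def)
      have "\<forall>j<length ns. x'!j \<noteq> 0 \<longrightarrow> y!j \<noteq> 0" using False lx xi i by (auto simp: x'_def nth_list_update)
      then have wx': "ww ns x' \<le> ww ns y" by (rule ww_mono)
      have "\<forall>j<length ns. x!j \<noteq> 0 \<longrightarrow> y!j \<noteq> 0" using False by auto
      then have wx: "ww ns x \<le> ww ns y" by (rule ww_mono)
      obtain p where p: "walk ?G p" "hd p = x'" "last p = y" "length p = Suc n"
        "\<forall>z\<in>set p. ww ns z \<le> max (ww ns x') (ww ns y)"
        using Suc.IH[rule_format, OF x'v y dx'] by blast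
      have pne: "p \<noteq> []" using p(4) by auto
      have lx': "length x' = length ns" using lx by (simp add: x'_def)
      have e2: "\<forall>j<length ns. j \<noteq> i \<longrightarrow> x!j = x'!j" by (simp add: x'_def)
      have c: "x!i < ns!i" "x'!i < ns!i" "x!i \<noteq> x'!i" "x!i = 0 \<or> x'!i = 0"
      proof -
        have e: "x'!i = y!i" using lx i(1) by (simp add: x'_def)
        show "x!i < ns!i" by (rule lbx[rule_format, OF i(1)])
        show "x'!i < ns!i" unfolding e by (rule lby[rule_format, OF i(1)])
        show "x!i \<noteq> x'!i" unfolding e using xi by simp
        show "x!i = 0 \<or> x'!i = 0" using xi by simp
      qed
      have adj: "adj ?G x x'" unfolding adj_cp using i(1) lx lx' e2 c by blast
      have wk: "walk ?G (x # p)" using walk_Cons[OF pne, of ?G x] p(1,2) adj x by simp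
      have m1: "max (ww ns x') (ww ns y) = ww ns y" using wx' by simp
      have m2: "max (ww ns x) (ww ns y) = ww ns y" using wx by simp
      have "\<forall>z\<in>set (x # p). ww ns z \<le> max (ww ns x) (ww ns y)" using p(5) wx unfolding m1 m2 by simp
      then show ?thesis using wk p(3,4) pne by (intro exI[of _ "x # p"]) simp
    qed
  qed
qed

lemma gdist_le: "walk G p \<Longrightarrow> hd p = x \<Longrightarrow> last p = y \<Longrightarrow> length p = Suc n \<Longrightarrow> gdist G x y \<le> enat n"
  unfolding gdist_def by (rule order_trans[OF INF_lower[of p]]) auto

lemma gdist_ge: "(\<And>p. walk G p \<Longrightarrow> hd p = x \<Longrightarrow> last p = y \<Longrightarrow> n \<le> length p - 1) \<Longrightarrow> enat n \<le> gdist G x y"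
  unfolding gdist_def by (rule INF_greatest) auto

lemma gdist_cp:
  assumes "x \<in> verts (cart_prod (map star ns))" "y \<in> verts (cart_prod (map star ns))"
  shows "gdist (cart_prod (map star ns)) x y = enat (DD ns x y)"
proof (rule antisym)
  obtain p where "walk (cart_prod (map star ns)) p" "hd p = x" "last p = y" "length p = Suc (DD ns x y)"
    using construct[rule_format, OF assms(1) assms(2) refl] by blast
  then show "gdist (cart_prod (map star ns)) x y \<le> enat (DD ns x y)" by (rule gdist_le)
  show "enat (DD ns x y) \<le> gdist (cart_prod (map star ns)) x y"
  proof (rule gdist_ge)
    fix q assume q: "walk (cart_prod (map star ns)) q" "hd q = x" "last q = y"
    then have "DD ns (hd q) (last q) \<le> length q - 1" using walk_lower by blast
    then show "DD ns x y \<le> length q - 1" using q by simp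
  qed
qed

theorem lemma3p6:
  fixes ns :: "nat list" and k :: nat
  assumes "\<forall>n \<in> set ns. n \<ge> 1"
  shows "isometric_subgraph
           (induced (cart_prod (map star ns))
                    (closed_nbhd (cart_prod (map star ns)) (replicate (length ns) 0) k))
           (cart_prod (map star ns))"
proof -
  let ?G = "cart_prod (map star ns)"
  let ?B = "closed_nbhd ?G (replicate (length ns) 0) k"
  have "\<forall>i<length ns. 0 < ns!i"
  proof (intro allI impI)
    fix i assume "i < length ns"
    then have "ns!i \<in> set ns" by (rule nth_mem)
    then show "0 < ns!i" using assms by fastforce
  qed
  then have zv: "replicate (length ns) 0 \<in> verts ?G" by (simp add: verts_cp)
  have gz: "\<And>x. x \<in> verts ?G \<Longrightarrow> gdist ?G (replicate (length ns) 0) x = enat (ww ns x)"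
    by (simp add: ww_DD gdist_cp[OF zv])
  have B: "?B = {x \<in> verts ?G. ww ns x \<le> k}"
  proof (rule set_eqI)
    fix x show "x \<in> ?B \<longleftrightarrow> x \<in> {x \<in> verts ?G. ww ns x \<le> k}"
    proof (cases "x \<in> verts ?G")
      case True then show ?thesis using gz[OF True] by (simp add: closed_nbhd_def)
    next
      case False then show ?thesis by (simp add: closed_nbhd_def)
    qed
  qed
  have vH: "verts (induced ?G ?B) = ?B" unfolding induced_def closed_nbhd_def by (auto simp: verts_def)
  show ?thesis
    unfolding isometric_subgraph_def
  proof (intro conjI ballI allI impI)
    show "verts (induced ?G ?B) \<subseteq> verts ?G" by (auto simp: induced_def verts_def)
  next
    fix a b assume "adj (induced ?G ?B) a b" then show "adj ?G a b" by (simp add: induced_def adj_def)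
  next
    fix x y assume x: "x \<in> verts (induced ?G ?B)" and y: "y \<in> verts (induced ?G ?B)"
    have "x \<in> ?B" "y \<in> ?B" using x y unfolding vH .
    then have xv: "x \<in> verts ?G" "ww ns x \<le> k" and yv: "y \<in> verts ?G" "ww ns y \<le> k" unfolding B by auto
    obtain p where p: "walk ?G p" "hd p = x" "last p = y" "length p = Suc (DD ns x y)"
      "\<forall>z\<in>set p. ww ns z \<le> max (ww ns x) (ww ns y)"
      using construct[rule_format, OF xv(1) yv(1) refl] by blast
    have sv: "set p \<subseteq> verts ?G" using p(1) by (simp add: walk_def)
    have sw: "ww ns z \<le> k" if "z \<in> set p" for z
    proof -
      have "ww ns z \<le> max (ww ns x) (ww ns y)" using p(5) that by blast
      also have "\<dots> \<le> k" using xv(2) yv(2) by simp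
      finally show ?thesis .
    qed
    have "set p \<subseteq> ?B" unfolding B using sv sw by blast
    then have "walk (induced ?G ?B) p" using p(1) walk_induced by blast
    then have le: "gdist (induced ?G ?B) x y \<le> enat (DD ns x y)" using p(2-4) by (rule gdist_le)
    have ge: "enat (DD ns x y) \<le> gdist (induced ?G ?B) x y"
    proof (rule gdist_ge)
      fix q assume q: "walk (induced ?G ?B) q" "hd q = x" "last q = y"
      then have "walk ?G q" using walk_induced by blast
      then have "DD ns (hd q) (last q) \<le> length q - 1" by (rule walk_lower)
      then show "DD ns x y \<le> length q - 1" using q by simp
    qed
    show "gdist (induced ?G ?B) x y = gdist ?G x y"
      using le ge gdist_cp[OF xv(1) yv(1)] by simp
  qed
qed

end
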